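(* Let $X=\{a,\dots,b\}\subseteq\mathbb{N}$, let $f^\alpha:\mathcal{P}^n\to X$ be a median voter scheme with fixed ballots $\alpha_1\le\dots\le\alpha_{n-1}$ in $X$, and let $i\in N$. Then $x\in V_i$ if and only if $x<\alpha_1$ or $x>\alpha_{n-1}$.
   Context: $N=\{1,\dots,n\}$, $n\ge2$; $X=\{a,a+1,\dots,b\}$, $|X|\ge2$; $\mathcal{P}$ all strict linear orders on $X$; $t(P_i)$ the top of $P_i$. $f^\alpha(P)=\mathrm{med}\{t(P_1),\dots,t(P_n),\alpha_1,\dots,\alpha_{n-1}\}$. Option set $O(P_i)=\{f^\alpha(P_i,P_{-i}):P_{-i}\in\mathcal{P}^{n-1}\}$. Agent $i$ vetoes $x$ via $P_i$ if $x\notin O(P_i)$; $V_i$ is the set of alternatives that $i$ vetoes via some preference $P_i\in\mathcal{P}$. *)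

theory Defs
  imports Main "HOL-Library.Multiset"
begin

text \<open>Alternatives are natural numbers; X = {a..b}. A preference is a strict linear
order P on X, with (x,y) \<in> P meaning x is strictly preferred to y.\<close>

definition prefs :: "nat set \<Rightarrow> (nat \<times> nat) set set" where
  "prefs X = {P. strict_linear_order_on X P \<and> P \<subseteq> X \<times> X}"

definition top_pref :: "nat set \<Rightarrow> (nat \<times> nat) set \<Rightarrow> nat" where
  "top_pref X P = (THE x. x \<in> X \<and> (\<forall>y\<in>X. y \<noteq> x \<longrightarrow> (x, y) \<in> P))"

definition med :: "nat multiset \<Rightarrow> nat" where
  "med M = sorted_list_of_multiset M ! (size M div 2)"

definition mvs :: "nat \<Rightarrow> nat set \<Rightarrow> (nat \<Rightarrow> nat) \<Rightarrow> (nat \<Rightarrow> (nat \<times> nat) set) \<Rightarrow> nat" where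
  "mvs n X alpha P = med (image_mset (\<lambda>j. top_pref X (P j)) (mset_set {1..n})
                        + image_mset alpha (mset_set {1..n-1}))"

definition profiles :: "nat \<Rightarrow> nat set \<Rightarrow> (nat \<Rightarrow> (nat \<times> nat) set) set" where
  "profiles n X = {P. \<forall>j\<in>{1..n}. P j \<in> prefs X}"

definition option_set :: "nat \<Rightarrow> nat set \<Rightarrow> (nat \<Rightarrow> nat) \<Rightarrow> nat \<Rightarrow> (nat \<times> nat) set \<Rightarrow> nat set" where
  "option_set n X alpha i Pi = {mvs n X alpha Q | Q. Q \<in> profiles n X \<and> Q i = Pi}"

definition veto_set :: "nat \<Rightarrow> nat set \<Rightarrow> (nat \<Rightarrow> nat) \<Rightarrow> nat \<Rightarrow> nat set" where
  "veto_set n X alpha i = {x \<in> X. \<exists>Pi \<in> prefs X. x \<notin> option_set n X alpha i Pi}"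

end

theory Submission
  imports Defs
begin

lemma sorted_ge:
  fixes M :: "nat multiset"
  assumes "size (filter_mset (\<lambda>y. y < m) M) \<le> k" "k < size M"
  shows "m \<le> sorted_list_of_multiset M ! k"
proof (rule ccontr)
  define s where "s = sorted_list_of_multiset M"
  assume "\<not> m \<le> sorted_list_of_multiset M ! k"
  hence lt: "s ! k < m" unfolding s_def by simp
  have so: "sorted s" and ms: "mset s = M" unfolding s_def by simp_all
  have len: "k < length s" using assms(2) ms by (metis size_mset)
  have "\<forall>y\<in>set (take (Suc k) s). y < m"
  proof
    fix y assume "y \<in> set (take (Suc k) s)"
    then obtain j where j: "j < length (take (Suc k) s)" "y = take (Suc k) s ! j"
      by (metis in_set_conv_nth)
    hence "j \<le> k" "y = s ! j" by auto
    hence "y \<le> s ! k" using so len by (simp add: sorted_nth_mono)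
    thus "y < m" using lt by simp
  qed
  hence "filter (\<lambda>y. y < m) (take (Suc k) s) = take (Suc k) s" by simp
  moreover have "filter (\<lambda>y. y < m) s = filter (\<lambda>y. y < m) (take (Suc k) s) @ filter (\<lambda>y. y < m) (drop (Suc k) s)"
    by (metis append_take_drop_id filter_append)
  ultimately have "length (filter (\<lambda>y. y < m) s) = length (take (Suc k) s) + length (filter (\<lambda>y. y < m) (drop (Suc k) s))"
    by simp
  hence "Suc k \<le> length (filter (\<lambda>y. y < m) s)"
    using len by simp
  also have "\<dots> = size (filter_mset (\<lambda>y. y < m) M)"
    by (metis ms mset_filter size_mset)
  finally show False using assms(1) by simp
qed

lemma sorted_le:
  fixes M :: "nat multiset"
  assumes "k < size (filter_mset (\<lambda>y. y \<le> m) M)"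
  shows "sorted_list_of_multiset M ! k \<le> m"
proof (rule ccontr)
  define s where "s = sorted_list_of_multiset M"
  assume "\<not> sorted_list_of_multiset M ! k \<le> m"
  hence lt: "m < s ! k" unfolding s_def by simp
  have so: "sorted s" and ms: "mset s = M" unfolding s_def by simp_all
  have "size (filter_mset (\<lambda>y. y \<le> m) M) \<le> size M" by (rule size_filter_mset_lesseq)
  hence len: "k < length s" using assms ms by (metis size_mset order_less_le_trans)
  have "\<forall>y\<in>set (drop k s). \<not> y \<le> m"
  proof
    fix y assume "y \<in> set (drop k s)"
    then obtain j where j: "j < length (drop k s)" "y = drop k s ! j"
      by (metis in_set_conv_nth)
    hence "k + j < length s" "y = s ! (k + j)" by auto
    hence "s ! k \<le> y" using so by (simp add: sorted_nth_mono)
    thus "\<not> y \<le> m" using lt by simp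
  qed
  hence "filter (\<lambda>y. y \<le> m) (drop k s) = []" by (simp add: filter_empty_conv)
  hence "length (filter (\<lambda>y. y \<le> m) s) = length (filter (\<lambda>y. y \<le> m) (take k s))"
  proof -
    have "filter (\<lambda>y. y \<le> m) s = filter (\<lambda>y. y \<le> m) (take k s) @ filter (\<lambda>y. y \<le> m) (drop k s)"
      by (metis append_take_drop_id filter_append)
    thus ?thesis using \<open>filter (\<lambda>y. y \<le> m) (drop k s) = []\<close> by simp
  qed
  also have "\<dots> \<le> k" by (rule order_trans[OF length_filter_le]) simp
  finally have "length (filter (\<lambda>y. y \<le> m) s) \<le> k" .
  moreover have "length (filter (\<lambda>y. y \<le> m) s) = size (filter_mset (\<lambda>y. y \<le> m) M)"
    by (metis ms mset_filter size_mset)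
  ultimately show False using assms by simp
qed

lemma card_ge1: "finite S \<Longrightarrow> y \<in> S \<Longrightarrow> 1 \<le> card S"
  by (auto simp: Suc_le_eq card_gt_0_iff)

definition pref_top :: "nat set \<Rightarrow> nat \<Rightarrow> (nat \<times> nat) set" where
  "pref_top X t = {(u,v). u \<in> X \<and> v \<in> X \<and> (if u = t then 0 else Suc u) < (if v = t then 0 else Suc v)}"

lemma pref_top_prefs: "pref_top X t \<in> prefs X"
  unfolding prefs_def pref_top_def strict_linear_order_on_def trans_def irrefl_def total_on_def
  by (auto split: if_splits)

lemma pref_top_top: assumes "t \<in> X" shows "top_pref X (pref_top X t) = t"
  unfolding top_pref_def
proof (rule the_equality)
  show "t \<in> X \<and> (\<forall>y\<in>X. y \<noteq> t \<longrightarrow> (t, y) \<in> pref_top X t)"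
    using assms unfolding pref_top_def by auto
next
  fix x assume "x \<in> X \<and> (\<forall>y\<in>X. y \<noteq> x \<longrightarrow> (x, y) \<in> pref_top X t)"
  thus "x = t" using assms unfolding pref_top_def by (auto split: if_splits)
qed

lemma count_mvs:
  fixes n :: nat and alpha :: "nat \<Rightarrow> nat" and Q :: "nat \<Rightarrow> (nat \<times> nat) set"
  shows
  "size (filter_mset P (image_mset (\<lambda>j. top_pref X (Q j)) (mset_set {1..n})
                        + image_mset alpha (mset_set {1..n-1})))
   = card {j\<in>{1..n}. P (top_pref X (Q j))} + card {k\<in>{1..n-1}. P (alpha k)}"
proof -
  have e1: "filter_mset (\<lambda>j. P (top_pref X (Q j))) (mset_set {1..n}) = mset_set {j\<in>{1..n}. P (top_pref X (Q j))}"
    by (rule filter_mset_mset_set) simp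
  have e2: "filter_mset (\<lambda>k. P (alpha k)) (mset_set {1..n-1}) = mset_set {k\<in>{1..n-1}. P (alpha k)}"
    by (rule filter_mset_mset_set) simp
  show ?thesis by (simp only: filter_union_mset filter_mset_image_mset e1 e2 size_union size_image_mset size_mset_set)
qed


lemma mvs_eq: "mvs n X alpha Q = sorted_list_of_multiset
   (image_mset (\<lambda>j. top_pref X (Q j)) (mset_set {1..n}) + image_mset alpha (mset_set {1..n-1})) ! (n - 1)"
  if "n \<ge> 1"
proof -
  have h: "(n + n - Suc 0) div 2 = n - 1" using that by presburger
  show ?thesis using that unfolding mvs_def med_def by (simp add: h)
qed

theorem lemma1:
  fixes n a b i x :: nat and alpha :: "nat \<Rightarrow> nat"
  assumes "n \<ge> 2" and "a < b"
    and "\<forall>k\<in>{1..n-1}. alpha k \<in> {a..b}"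
    and "\<forall>k\<in>{1..n-1}. \<forall>l\<in>{1..n-1}. k \<le> l \<longrightarrow> alpha k \<le> alpha l"
    and "i \<in> {1..n}"
    and "x \<in> {a..b}"
  shows "x \<in> veto_set n {a..b} alpha i \<longleftrightarrow> (x < alpha 1 \<or> x > alpha (n-1))"
proof -
  define X where "X = {a..b::nat}"
  define M where "M = (\<lambda>Q. image_mset (\<lambda>j. top_pref X (Q j)) (mset_set {1..n}) + image_mset alpha (mset_set {1..n-1}))"
  have sz: "size (M Q) = n + (n - 1)" for Q unfolding M_def by simp
  have mv: "mvs n X alpha Q = sorted_list_of_multiset (M Q) ! (n - 1)" for Q
    unfolding M_def using mvs_eq assms(1) by simp
  have cnt: "size (filter_mset P (M Q)) = card {j\<in>{1..n}. P (top_pref X (Q j))} + card {k\<in>{1..n-1}. P (alpha k)}" for P Q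
    unfolding M_def by (rule count_mvs)
  have lo: "alpha 1 \<le> alpha k" and hi: "alpha k \<le> alpha (n-1)" if "k \<in> {1..n-1}" for k
    using assms(1,4) that by auto
  have aX: "a \<in> X" "b \<in> X" "x \<in> X" using assms unfolding X_def by auto
  have a1: "a \<le> alpha (n-1)" "alpha 1 \<le> b" using assms(1,3) by auto
  show ?thesis
  proof
    assume "x \<in> veto_set n {a..b} alpha i"
    then obtain Pi where Pi: "Pi \<in> prefs X" "x \<notin> option_set n X alpha i Pi"
      unfolding veto_set_def X_def by blast
    show "x < alpha 1 \<or> x > alpha (n-1)"
    proof (rule ccontr)
      assume "\<not> ?thesis"
      hence xr: "alpha 1 \<le> x" "x \<le> alpha (n-1)" by auto
      define Q where "Q = (\<lambda>j. if j = i then Pi else pref_top X x)"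
      have Qp: "Q \<in> profiles n X" unfolding Q_def profiles_def using Pi(1) pref_top_prefs by auto
      have tQ: "top_pref X (Q j) = x" if "j \<noteq> i" for j using that pref_top_top[OF aX(3)] unfolding Q_def by simp
      have "x \<le> sorted_list_of_multiset (M Q) ! (n - 1)"
      proof (rule sorted_ge)
        have "{j\<in>{1..n}. top_pref X (Q j) < x} \<subseteq> {i}" using tQ by auto
        hence c1: "card {j\<in>{1..n}. top_pref X (Q j) < x} \<le> 1"
          using card_mono[of "{i}"] by fastforce
        have "{k\<in>{1..n-1}. alpha k < x} \<subseteq> {1..n-2}"
        proof
          fix k assume k: "k \<in> {k\<in>{1..n-1}. alpha k < x}"
          hence "k \<noteq> n - 1" using xr by auto
          thus "k \<in> {1..n-2}" using k by auto
        qed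
        hence "card {k\<in>{1..n-1}. alpha k < x} \<le> card {1..n-2}" by (intro card_mono) auto
        hence "card {k\<in>{1..n-1}. alpha k < x} \<le> n - 2" by simp
        thus "size (filter_mset (\<lambda>y. y < x) (M Q)) \<le> n - 1" using c1 cnt assms(1) by simp
        show "n - 1 < size (M Q)" using sz assms(1) by simp
      qed
      moreover have "sorted_list_of_multiset (M Q) ! (n - 1) \<le> x"
      proof (rule sorted_le)
        have "{1..n} - {i} \<subseteq> {j\<in>{1..n}. top_pref X (Q j) \<le> x}" using tQ by auto
        hence c1: "n - 1 \<le> card {j\<in>{1..n}. top_pref X (Q j) \<le> x}"
          using card_mono[of "{j\<in>{1..n}. top_pref X (Q j) \<le> x}" "{1..n} - {i}"] assms(5) by simp
        have "1 \<in> {k\<in>{1..n-1}. alpha k \<le> x}" using xr assms(1) by auto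
        hence "1 \<le> card {k\<in>{1..n-1}. alpha k \<le> x}" by (intro card_ge1[of _ 1]) auto
        thus "n - 1 < size (filter_mset (\<lambda>y. y \<le> x) (M Q))" using c1 cnt assms(1) by simp
      qed
      ultimately have "mvs n X alpha Q = x" using mv by simp
      hence "x \<in> option_set n X alpha i Pi" unfolding option_set_def using Qp by (intro CollectI exI[of _ Q]) (simp add: Q_def)
      thus False using Pi(2) by simp
    qed
  next
    assume "x < alpha 1 \<or> x > alpha (n-1)"
    thus "x \<in> veto_set n {a..b} alpha i"
    proof
      assume xl: "x < alpha 1"
      have "x \<notin> option_set n X alpha i (pref_top X b)"
      proof
        assume "x \<in> option_set n X alpha i (pref_top X b)"
        then obtain Q where Q: "Q \<in> profiles n X" "Q i = pref_top X b" "mvs n X alpha Q = x"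
          unfolding option_set_def by blast
        have "alpha 1 \<le> sorted_list_of_multiset (M Q) ! (n - 1)"
        proof (rule sorted_ge)
          have "{j\<in>{1..n}. top_pref X (Q j) < alpha 1} \<subseteq> {1..n} - {i}"
            using Q(2) pref_top_top[OF aX(2)] a1 by auto
          hence "card {j\<in>{1..n}. top_pref X (Q j) < alpha 1} \<le> n - 1"
            using card_mono[of "{1..n} - {i}"] assms(5) by simp
          moreover have "{k\<in>{1..n-1}. alpha k < alpha 1} = {}" using lo by force
          ultimately show "size (filter_mset (\<lambda>y. y < alpha 1) (M Q)) \<le> n - 1" by (simp only: cnt card.empty add_0_right)
          show "n - 1 < size (M Q)" using sz assms(1) by simp
        qed
        thus False using Q(3) mv xl by simp
      qed
      thus ?thesis unfolding veto_set_def X_def using pref_top_prefs assms(6) by blast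
    next
      assume xl: "x > alpha (n-1)"
      have "x \<notin> option_set n X alpha i (pref_top X a)"
      proof
        assume "x \<in> option_set n X alpha i (pref_top X a)"
        then obtain Q where Q: "Q \<in> profiles n X" "Q i = pref_top X a" "mvs n X alpha Q = x"
          unfolding option_set_def by blast
        have "sorted_list_of_multiset (M Q) ! (n - 1) \<le> alpha (n-1)"
        proof (rule sorted_le)
          have "i \<in> {j\<in>{1..n}. top_pref X (Q j) \<le> alpha (n-1)}"
            using Q(2) pref_top_top[OF aX(1)] a1 assms(5) by auto
          hence "1 \<le> card {j\<in>{1..n}. top_pref X (Q j) \<le> alpha (n-1)}"
            by (intro card_ge1[of _ i]) auto
          moreover have "{k\<in>{1..n-1}. alpha k \<le> alpha (n-1)} = {1..n-1}" using hi by force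
          ultimately show "n - 1 < size (filter_mset (\<lambda>y. y \<le> alpha (n-1)) (M Q))" using cnt assms(1) by simp
        qed
        thus False using Q(3) mv xl by simp
      qed
      thus ?thesis unfolding veto_set_def X_def using pref_top_prefs assms(6) by blast
    qed
  qed
qed

end
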